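(* Consider the spectrum-oligopoly game described in the context on a mean valid conflict graph characterized by $I_1,\dots,I_d$. Suppose a symmetric Nash equilibrium exists in which, for each state $j\in\{1,\dots,n\}$, each primary selects only independent sets among $I_1,\dots,I_d$, choosing $I_s$ with probability $t_{s,j}$ ($\sum_st_{s,j}=1$). For each $s$, define $\gamma_{s,j}=\sum_{k=j}^nt_{s,k}q_k$ ($\gamma_{s,n+1}=0$), $U_{s,1}=v$ and recursively $p_{s,j}=c+(f_j(U_{s,j})-c)W(\gamma_{s,j})$, $L_{s,j}=g_j\!\left(\frac{p_{s,j}-c}{W(\gamma_{s,j+1})}+c\right)$, $U_{s,j+1}=L_{s,j}$. If $t_{s,j}>0$ and $t_{r,j}>0$, then $U_{s,j}=U_{r,j}$.
   Context: Model. $l$ primaries; $m$ secondaries at each node of a finite conflict graph $G=(V,E)$, integers $1\le m<l$. Each primary's channel state $j\in\{0,\dots,n\}$ is the same at every node; states independent across primaries, equal to $j$ w.p. $q_j$, $\sum_{j\ge1}q_j<1$; state 0 means unsellable. Constants $c$, $v$. For $j=1..n$, $g_j$ continuous strictly increasing, $g_i(p)<g_j(p)$ for $i>j$, $f_j=g_j^{-1}$, and for $i<j$, $x>y>g_i(c)$: $\frac{f_i(y)-c}{f_j(y)-c}<\frac{f_i(x)-c}{f_j(x)-c}$; and $f_1(v)>c$. In state $j\ge1$ a primary (knowing only its own state) chooses, possibly randomly, an independent set of $G$ and a penalty at each of its nodes. At each node the $\min(Y,m)$ lowest-penalty offers among the $Y$ offers with penalty $\le v$ are sold (ties uniformly random);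 a sale at penalty $x$ in state $j$ earns $f_j(x)-c$, else 0; payoff sums over nodes. Nash equilibrium: no primary in any state can gain by unilateral deviation; symmetric if all use the same strategy. $w(x)=\sum_{i=m}^{l-1}\binom{l-1}{i}x^i(1-x)^{l-1-i}$, $W=1-w$. Mean valid graph: $V=I_1\sqcup\dots\sqcup I_d$, $d\ge2$, maximal independent sets, $M_s=|I_s|$, $M_1\ge\dots\ge M_d$, and every independent set $I$ has $\sum_s|I\cap I_s|/M_s\le1$. *)

theory Defs
  imports "HOL-Probability.Probability"
begin

definition indep :: "('v \<Rightarrow> 'v \<Rightarrow> bool) \<Rightarrow> 'v set \<Rightarrow> bool" where
  "indep E I \<longleftrightarrow> (\<forall>a\<in>I. \<forall>b\<in>I. \<not> E a b)"

definition maximal_indep :: "('v \<Rightarrow> 'v \<Rightarrow> bool) \<Rightarrow> 'v set \<Rightarrow> bool" where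
  "maximal_indep E I \<longleftrightarrow> indep E I \<and> (\<forall>w. w \<notin> I \<longrightarrow> \<not> indep E (insert w I))"

definition mean_valid :: "('v::finite \<Rightarrow> 'v \<Rightarrow> bool) \<Rightarrow> nat \<Rightarrow> (nat \<Rightarrow> 'v set) \<Rightarrow> bool" where
  "mean_valid E d Iset \<longleftrightarrow>
     d \<ge> 2
   \<and> (\<Union>s\<in>{1..d}. Iset s) = UNIV
   \<and> (\<forall>s\<in>{1..d}. \<forall>r\<in>{1..d}. s \<noteq> r \<longrightarrow> Iset s \<inter> Iset r = {})
   \<and> (\<forall>s\<in>{1..d}. maximal_indep E (Iset s))
   \<and> (\<forall>s\<in>{1..d}. \<forall>r\<in>{1..d}. s \<le> r \<longrightarrow> card (Iset r) \<le> card (Iset s))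
   \<and> (\<forall>I. indep E I \<longrightarrow> (\<Sum>s=1..d. real (card (I \<inter> Iset s)) / real (card (Iset s))) \<le> 1)"

definition wfun :: "nat \<Rightarrow> nat \<Rightarrow> real \<Rightarrow> real" where
  "wfun l m x = (\<Sum>i=m..l-1. real ((l-1) choose i) * x ^ i * (1 - x) ^ (l - 1 - i))"

definition Wfun :: "nat \<Rightarrow> nat \<Rightarrow> real \<Rightarrow> real" where
  "Wfun l m x = 1 - wfun l m x"

text \<open>An action of a primary: an independent set together with a penalty at every node
  (only the penalties at nodes of the chosen set matter).  A (mixed) strategy in a state is a
  probability measure on this action space.\<close>
definition actM :: "('v set \<times> ('v \<Rightarrow> real)) measure" where
  "actM = count_space UNIV \<Otimes>\<^sub>M (\<Pi>\<^sub>M i\<in>UNIV. (borel :: real measure))"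

text \<open>Probability that one given other primary (whose state is random with law q and who plays
  the symmetric strategy sigma) makes an offer at node i with penalty below x (resp. equal to x)
  and at most v.  State 0 yields no offer.\<close>
definition lowprob :: "nat \<Rightarrow> (nat \<Rightarrow> real) \<Rightarrow> real \<Rightarrow> (nat \<Rightarrow> ('v set \<times> ('v \<Rightarrow> real)) measure)
    \<Rightarrow> 'v \<Rightarrow> real \<Rightarrow> real" where
  "lowprob n q v \<sigma> i x = (\<Sum>k=1..n. q k * measure (\<sigma> k) {a. i \<in> fst a \<and> snd a i < x \<and> snd a i \<le> v})"

definition eqprob :: "nat \<Rightarrow> (nat \<Rightarrow> real) \<Rightarrow> real \<Rightarrow> (nat \<Rightarrow> ('v set \<times> ('v \<Rightarrow> real)) measure)
    \<Rightarrow> 'v \<Rightarrow> real \<Rightarrow> real" where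
  "eqprob n q v \<sigma> i x = (\<Sum>k=1..n. q k * measure (\<sigma> k) {a. i \<in> fst a \<and> snd a i = x \<and> snd a i \<le> v})"

text \<open>Probability that our offer is sold when A other offers have strictly lower penalty and B
  other offers have the same penalty (m lowest are sold, ties broken uniformly at random).\<close>
definition sold :: "nat \<Rightarrow> nat \<Rightarrow> nat \<Rightarrow> real" where
  "sold m A B = (if m \<le> A then 0 else if A + B < m then 1 else real (m - A) / real (B + 1))"

text \<open>Sale probability when each of the l-1 other primaries independently has probability a of an
  offer with lower penalty and b of an offer with equal penalty (multinomial law of (A,B)).\<close>
definition sale_prob :: "nat \<Rightarrow> nat \<Rightarrow> real \<Rightarrow> real \<Rightarrow> real" where
  "sale_prob l m a b =
     (\<Sum>A\<le>l-1. \<Sum>B\<le>l-1-A. real ((l-1) choose A) * real ((l-1-A) choose B)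
        * a ^ A * b ^ B * (1 - a - b) ^ (l - 1 - A - B) * sold m A B)"

text \<open>Expected payoff of a primary in state j playing the pure action (I,x) while the other
  l-1 primaries use the symmetric strategy sigma; f j is the inverse of g j.\<close>
definition payoff :: "nat \<Rightarrow> nat \<Rightarrow> nat \<Rightarrow> (nat \<Rightarrow> real) \<Rightarrow> real \<Rightarrow> real \<Rightarrow> (nat \<Rightarrow> real \<Rightarrow> real)
    \<Rightarrow> (nat \<Rightarrow> ('v set \<times> ('v \<Rightarrow> real)) measure) \<Rightarrow> nat \<Rightarrow> 'v set \<times> ('v \<Rightarrow> real) \<Rightarrow> real" where
  "payoff l m n q c v g \<sigma> j a =
     (\<Sum>i\<in>fst a. if snd a i \<le> v
        then (inv (g j) (snd a i) - c) * sale_prob l m (lowprob n q v \<sigma> i (snd a i)) (eqprob n q v \<sigma> i (snd a i))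
        else 0)"

text \<open>Symmetric Nash equilibrium: sigma j is the (mixed) strategy in state j; it is a probability
  measure on actions, a.s. choosing independent sets, with well-defined expected payoff, and no
  deviation to any independent set / penalty vector (hence to any mixture) is profitable.\<close>
definition symNE :: "nat \<Rightarrow> nat \<Rightarrow> nat \<Rightarrow> (nat \<Rightarrow> real) \<Rightarrow> real \<Rightarrow> real \<Rightarrow> (nat \<Rightarrow> real \<Rightarrow> real)
    \<Rightarrow> ('v \<Rightarrow> 'v \<Rightarrow> bool) \<Rightarrow> (nat \<Rightarrow> ('v set \<times> ('v \<Rightarrow> real)) measure) \<Rightarrow> bool" where
  "symNE l m n q c v g E \<sigma> \<longleftrightarrow>
     (\<forall>j\<in>{1..n}.
        prob_space (\<sigma> j) \<and> sets (\<sigma> j) = sets actM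
      \<and> (AE a in \<sigma> j. indep E (fst a))
      \<and> integrable (\<sigma> j) (payoff l m n q c v g \<sigma> j)
      \<and> (\<forall>I x. indep E I \<longrightarrow>
           payoff l m n q c v g \<sigma> j (I, x) \<le> (\<integral>a. payoff l m n q c v g \<sigma> j a \<partial>\<sigma> j)))"

definition gam :: "nat \<Rightarrow> (nat \<Rightarrow> real) \<Rightarrow> (nat \<Rightarrow> nat \<Rightarrow> real) \<Rightarrow> nat \<Rightarrow> nat \<Rightarrow> real" where
  "gam n q t s j = (\<Sum>k=j..n. t s k * q k)"

text \<open>Urec ... s k = U_{s,k+1}; U_{s,1} = v and U_{s,j+1} = L_{s,j}.\<close>
primrec Urec :: "nat \<Rightarrow> nat \<Rightarrow> nat \<Rightarrow> (nat \<Rightarrow> real) \<Rightarrow> real \<Rightarrow> real \<Rightarrow> (nat \<Rightarrow> real \<Rightarrow> real)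
    \<Rightarrow> (nat \<Rightarrow> nat \<Rightarrow> real) \<Rightarrow> nat \<Rightarrow> nat \<Rightarrow> real" where
  "Urec l m n q c v g t s 0 = v"
| "Urec l m n q c v g t s (Suc k) =
     (let j = Suc k;
          p = c + (inv (g j) (Urec l m n q c v g t s k) - c) * Wfun l m (gam n q t s j)
      in g j ((p - c) / Wfun l m (gam n q t s (j + 1)) + c))"

definition Uval :: "nat \<Rightarrow> nat \<Rightarrow> nat \<Rightarrow> (nat \<Rightarrow> real) \<Rightarrow> real \<Rightarrow> real \<Rightarrow> (nat \<Rightarrow> real \<Rightarrow> real)
    \<Rightarrow> (nat \<Rightarrow> nat \<Rightarrow> real) \<Rightarrow> nat \<Rightarrow> nat \<Rightarrow> real" where
  "Uval l m n q c v g t s j = Urec l m n q c v g t s (j - 1)"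

end

theory Submission
  imports Defs
begin

lemma pred_in_fst[measurable]: "Measurable.pred (count_space UNIV \<Otimes>\<^sub>M M) (\<lambda>a. i \<in> fst a)"
  by (rule measurable_compose[OF measurable_fst, where g="\<lambda>X. i \<in> X"]) simp

lemma pred_eq_fst[measurable]: "Measurable.pred (count_space UNIV \<Otimes>\<^sub>M M) (\<lambda>a. fst a = I)"
  by (rule measurable_compose[OF measurable_fst, where g="\<lambda>X. X = I"]) simp

lemma t1: "(\<lambda>a::('v set \<times> ('v \<Rightarrow> real)). if i \<in> fst a then snd a i else v + 1) \<in> borel_measurable actM"
  unfolding actM_def by measurable

lemma space_actM: "space actM = UNIV"
  unfolding actM_def by (simp add: space_pair_measure space_PiM)

definition Wl :: "nat \<Rightarrow> nat \<Rightarrow> real \<Rightarrow> real" where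
  "Wl l m a = (\<Sum>A\<le>l-1. real ((l-1) choose A) * a ^ A * (1 - a) ^ (l - 1 - A) * (if A < m then 1 else 0))"

definition innr :: "nat \<Rightarrow> nat \<Rightarrow> nat \<Rightarrow> real \<Rightarrow> real \<Rightarrow> real" where
  "innr m N A a b = (\<Sum>B\<le>N. real (N choose B) * b ^ B * (1 - a - b) ^ (N - B) * sold m A B)"

lemma sale_prob_inner: "sale_prob l m a b = (\<Sum>A\<le>l-1. real ((l-1) choose A) * a ^ A * innr m (l-1-A) A a b)"
  unfolding sale_prob_def innr_def
  by (simp add: sum_distrib_left mult_ac diff_diff_add)

lemma binom_sum: "(\<Sum>B\<le>N. real (N choose B) * b ^ B * (x::real) ^ (N - B)) = (b + x) ^ N"
  by (simp add: binomial_ring)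

lemma sold_le1: "sold m A B \<le> 1"
  unfolding sold_def by (auto simp: divide_le_eq)

lemma sold_nonneg: "0 \<le> sold m A B"
  unfolding sold_def by auto

lemma innr_le:
  assumes "0 \<le> b" "0 \<le> 1 - a - b"
  shows "innr m N A a b \<le> (1 - a) ^ N * (if A < m then 1 else 0)"
proof (cases "A < m")
  case True
  have "innr m N A a b \<le> (\<Sum>B\<le>N. real (N choose B) * b ^ B * (1 - a - b) ^ (N - B))"
    unfolding innr_def
  proof (intro sum_mono)
    fix B assume "B \<in> {..N}"
    have "0 \<le> real (N choose B) * b ^ B * (1 - a - b) ^ (N - B)" using assms by auto
    then show "real (N choose B) * b ^ B * (1 - a - b) ^ (N - B) * sold m A B
       \<le> real (N choose B) * b ^ B * (1 - a - b) ^ (N - B)"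
      using sold_le1[of m A B] by (simp add: mult_left_le)
  qed
  also have "\<dots> = (1 - a) ^ N" by (simp add: binom_sum)
  finally show ?thesis using True by simp
next
  case False
  then have "sold m A B = 0" for B unfolding sold_def by auto
  then show ?thesis using False by (simp add: innr_def)
qed

lemma innr_nonneg:
  assumes "0 \<le> b" "0 \<le> 1 - a - b"
  shows "0 \<le> innr m N A a b"
  unfolding innr_def using assms sold_nonneg by (auto intro!: sum_nonneg)

lemma innr_zero: "innr m N A a 0 = (1 - a) ^ N * (if A < m then 1 else 0)"
proof -
  have "innr m N A a 0 = (\<Sum>B\<in>{0}. real (N choose B) * 0 ^ B * (1 - a - 0) ^ (N - B) * sold m A B)"
    unfolding innr_def by (rule sum.mono_neutral_right) auto
  then show ?thesis by (simp add: sold_def)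
qed

lemma innr_strict:
  assumes "0 < b" "0 < 1 - a - b" "1 \<le> m" "m \<le> N"
  shows "innr m N 0 a b < (1 - a) ^ N"
proof -
  have "innr m N 0 a b < (\<Sum>B\<le>N. real (N choose B) * b ^ B * (1 - a - b) ^ (N - B))"
    unfolding innr_def
  proof (rule sum_strict_mono_ex1)
    show "\<forall>x\<in>{..N}. real (N choose x) * b ^ x * (1 - a - b) ^ (N - x) * sold m 0 x
       \<le> real (N choose x) * b ^ x * (1 - a - b) ^ (N - x)"
      using assms sold_le1 by (auto intro!: mult_left_le)
    have "sold m 0 m < 1" using assms unfolding sold_def by (auto simp: divide_less_eq)
    moreover have "0 < real (N choose m) * b ^ m * (1 - a - b) ^ (N - m)"
      using assms by auto
    ultimately show "\<exists>x\<in>{..N}. real (N choose x) * b ^ x * (1 - a - b) ^ (N - x) * sold m 0 x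
       < real (N choose x) * b ^ x * (1 - a - b) ^ (N - x)"
      using assms by (intro bexI[of _ m]) (auto simp: mult_less_cancel_left1)
  qed simp
  also have "\<dots> = (1 - a) ^ N" by (simp add: binom_sum)
  finally show ?thesis .
qed

lemma sale_prob_le_Wl:
  assumes "0 \<le> a" "0 \<le> b" "a + b \<le> 1"
  shows "sale_prob l m a b \<le> Wl l m a"
  unfolding sale_prob_inner Wl_def
proof (intro sum_mono)
  fix A assume "A \<in> {..l-1}"
  have "innr m (l - 1 - A) A a b \<le> (1 - a) ^ (l - 1 - A) * (if A < m then 1 else 0)"
    using assms by (intro innr_le) auto
  then have "real (l - 1 choose A) * a ^ A * innr m (l - 1 - A) A a b
       \<le> real (l - 1 choose A) * a ^ A * ((1 - a) ^ (l - 1 - A) * (if A < m then 1 else 0))"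
    using assms by (intro mult_left_mono) auto
  then show "real (l - 1 choose A) * a ^ A * innr m (l - 1 - A) A a b
       \<le> real (l - 1 choose A) * a ^ A * (1 - a) ^ (l - 1 - A) * (if A < m then 1 else 0)"
    by (simp add: mult.assoc)
qed

lemma sale_prob_zero: "sale_prob l m a 0 = Wl l m a"
  unfolding sale_prob_inner Wl_def innr_zero by (simp add: mult_ac)

lemma sale_prob_strict:
  assumes "0 \<le> a" "0 < b" "a + b < 1" "1 \<le> m" "m < l"
  shows "sale_prob l m a b < Wl l m a"
  unfolding sale_prob_inner Wl_def
proof (rule sum_strict_mono_ex1)
  show "\<forall>x\<in>{..l-1}. real (l - 1 choose x) * a ^ x * innr m (l - 1 - x) x a b
       \<le> real (l - 1 choose x) * a ^ x * (1 - a) ^ (l - 1 - x) * (if x < m then 1 else 0)"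
  proof
    fix A assume "A \<in> {..l-1}"
    have "innr m (l - 1 - A) A a b \<le> (1 - a) ^ (l - 1 - A) * (if A < m then 1 else 0)"
      using assms by (intro innr_le) auto
    then have "real (l - 1 choose A) * a ^ A * innr m (l - 1 - A) A a b
         \<le> real (l - 1 choose A) * a ^ A * ((1 - a) ^ (l - 1 - A) * (if A < m then 1 else 0))"
      using assms by (intro mult_left_mono) auto
    then show "real (l - 1 choose A) * a ^ A * innr m (l - 1 - A) A a b
         \<le> real (l - 1 choose A) * a ^ A * (1 - a) ^ (l - 1 - A) * (if A < m then 1 else 0)"
      by (simp add: mult.assoc)
  qed
  show "\<exists>x\<in>{..l-1}. real (l - 1 choose x) * a ^ x * innr m (l - 1 - x) x a b
       < real (l - 1 choose x) * a ^ x * (1 - a) ^ (l - 1 - x) * (if x < m then 1 else 0)"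
    using assms innr_strict[of b a m "l-1"] by (intro bexI[of _ 0]) auto
qed simp

lemma sale_prob_nonneg:
  assumes "0 \<le> a" "0 \<le> b" "a + b \<le> 1"
  shows "0 \<le> sale_prob l m a b"
  unfolding sale_prob_inner using assms innr_nonneg[of b a]
  by (auto intro!: sum_nonneg)

lemma sale_prob_pos:
  assumes "0 \<le> a" "0 \<le> b" "a + b < 1" "1 \<le> m"
  shows "0 < sale_prob l m a b"
proof -
  have "(1 - a - b) ^ (l-1) \<le> innr m (l-1) 0 a b"
  proof -
    have "(1 - a - b) ^ (l-1) = (\<Sum>B\<in>{0}. real ((l-1) choose B) * b ^ B * (1 - a - b) ^ (l-1 - B) * sold m 0 B)"
      using assms by (simp add: sold_def)
    also have "\<dots> \<le> innr m (l-1) 0 a b" unfolding innr_def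
      by (rule sum_mono2) (use assms sold_nonneg in auto)
    finally show ?thesis .
  qed
  then have "0 < innr m (l-1) 0 a b" using assms
    by (smt (verit) zero_less_power)
  have "(\<Sum>A\<in>{0}. real ((l-1) choose A) * a ^ A * innr m (l-1-A) A a b)
      \<le> (\<Sum>A\<le>l-1. real ((l-1) choose A) * a ^ A * innr m (l-1-A) A a b)"
    by (rule sum_mono2) (use assms innr_nonneg[of b a] in auto)
  then show ?thesis unfolding sale_prob_inner using \<open>0 < innr m (l-1) 0 a b\<close> by simp
qed

lemma Wl_le1:
  assumes "0 \<le> a" "a \<le> 1"
  shows "Wl l m a \<le> 1"
proof -
  have "Wl l m a \<le> (\<Sum>A\<le>l-1. real ((l-1) choose A) * a ^ A * (1 - a) ^ (l - 1 - A))"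
    unfolding Wl_def by (intro sum_mono) (use assms in auto)
  also have "\<dots> = 1" using binom_sum[of "l-1" a "1-a"] by simp
  finally show ?thesis .
qed

lemma Wl_Wfun:
  assumes "1 \<le> m" "m < l"
  shows "Wl l m a = Wfun l m a"
proof -
  have tot: "(\<Sum>A\<le>l-1. real ((l-1) choose A) * a ^ A * (1 - a) ^ (l - 1 - A)) = 1"
    using binom_sum[of "l-1" a "1-a"] by simp
  have split: "{..l-1} = {..<m} \<union> {m..l-1}" using assms by auto
  have "(\<Sum>A\<le>l-1. real ((l-1) choose A) * a ^ A * (1 - a) ^ (l - 1 - A))
     = (\<Sum>A<m. real ((l-1) choose A) * a ^ A * (1 - a) ^ (l - 1 - A))
     + (\<Sum>A=m..l-1. real ((l-1) choose A) * a ^ A * (1 - a) ^ (l - 1 - A))"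
    unfolding split by (rule sum.union_disjoint) auto
  moreover have "Wl l m a = (\<Sum>A<m. real ((l-1) choose A) * a ^ A * (1 - a) ^ (l - 1 - A))"
  proof -
    have "Wl l m a = (\<Sum>A\<in>{..<m} \<union> {m..l-1}. real ((l-1) choose A) * a ^ A * (1 - a) ^ (l - 1 - A) * (if A < m then 1 else 0))"
      unfolding Wl_def split ..
    also have "\<dots> = (\<Sum>A\<in>{..<m}. real ((l-1) choose A) * a ^ A * (1 - a) ^ (l - 1 - A) * (if A < m then 1 else 0))
       + (\<Sum>A\<in>{m..l-1}. real ((l-1) choose A) * a ^ A * (1 - a) ^ (l - 1 - A) * (if A < m then 1 else 0))"
      by (rule sum.union_disjoint) auto
    finally show ?thesis by simp
  qed
  ultimately show ?thesis unfolding Wfun_def wfun_def using tot by simp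
qed

locale game =
  fixes E :: "'v::finite \<Rightarrow> 'v \<Rightarrow> bool"
    and l m n d :: nat
    and q :: "nat \<Rightarrow> real"
    and c v :: real
    and g :: "nat \<Rightarrow> real \<Rightarrow> real"
    and Iset :: "nat \<Rightarrow> 'v set"
    and \<sigma> :: "nat \<Rightarrow> ('v set \<times> ('v \<Rightarrow> real)) measure"
    and t :: "nat \<Rightarrow> nat \<Rightarrow> real"
  assumes E_irrefl: "\<And>a. \<not> E a a"
    and ml: "1 \<le> m" "m < l"
    and q_nonneg: "\<And>k. k \<le> n \<Longrightarrow> 0 \<le> q k"
    and q_pos_sum: "(\<Sum>k=1..n. q k) < 1"
    and g_cont: "\<And>k. k \<in> {1..n} \<Longrightarrow> continuous_on UNIV (g k)"
    and g_mono: "\<And>k. k \<in> {1..n} \<Longrightarrow> strict_mono (g k)"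
    and g_bij: "\<And>k. k \<in> {1..n} \<Longrightarrow> bij (g k)"
    and g_order: "\<And>i k p. i \<in> {1..n} \<Longrightarrow> k \<in> {1..n} \<Longrightarrow> k < i \<Longrightarrow> g i p < g k p"
    and ratio: "\<And>i k x y. i \<in> {1..n} \<Longrightarrow> k \<in> {1..n} \<Longrightarrow> i < k \<Longrightarrow> x > y \<Longrightarrow> y > g i c \<Longrightarrow>
        (inv (g i) y - c) / (inv (g k) y - c) < (inv (g i) x - c) / (inv (g k) x - c)"
    and f1v: "inv (g 1) v > c"
    and mv: "mean_valid E d Iset"
    and NE: "symNE l m n q c v g E \<sigma>"
    and supp: "\<And>k. k \<in> {1..n} \<Longrightarrow> AE a in \<sigma> k. fst a \<in> Iset ` {1..d}"
    and t_def: "\<And>s' k. s' \<in> {1..d} \<Longrightarrow> k \<in> {1..n} \<Longrightarrow> t s' k = measure (\<sigma> k) {a. fst a = Iset s'}"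
begin

abbreviation f :: "nat \<Rightarrow> real \<Rightarrow> real" where "f k \<equiv> inv (g k)"

lemma f_g: "k \<in> {1..n} \<Longrightarrow> f k (g k x) = x"
  using g_bij by (simp add: bij_is_inj)

lemma g_f: "k \<in> {1..n} \<Longrightarrow> g k (f k y) = y"
  using g_bij by (simp add: bij_is_surj surj_f_inv_f)

lemma f_less: "k \<in> {1..n} \<Longrightarrow> x < y \<Longrightarrow> f k x < f k y"
  by (metis g_f g_mono strict_mono_less linorder_neqE_linordered_idom order_less_asym)

lemma f_less_iff: "k \<in> {1..n} \<Longrightarrow> f k x < f k y \<longleftrightarrow> x < y"
  by (metis f_less linorder_neqE_linordered_idom order_less_asym)

lemma f_le_iff: "k \<in> {1..n} \<Longrightarrow> f k x \<le> f k y \<longleftrightarrow> x \<le> y"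
  by (meson f_less_iff not_le)

lemma f_inj: "k \<in> {1..n} \<Longrightarrow> f k x = f k y \<Longrightarrow> x = y"
  by (metis g_f)

lemma f_cont: "k \<in> {1..n} \<Longrightarrow> isCont (f k) y"
proof -
  assume k: "k \<in> {1..n}"
  have "isCont (f k) (g k (f k y))"
    by (rule isCont_inverse_function[where d=1]) (use k f_g g_cont in \<open>auto simp: continuous_on_eq_continuous_at\<close>)
  then show ?thesis using g_f[OF k] by simp
qed

lemma f_gt_c_iff: "k \<in> {1..n} \<Longrightarrow> c < f k x \<longleftrightarrow> g k c < x"
  by (metis f_g f_less_iff)

lemma f_order: "k \<in> {1..n} \<Longrightarrow> k' \<in> {1..n} \<Longrightarrow> k < k' \<Longrightarrow> f k x < f k' x"
proof -
  assume a: "k \<in> {1..n}" "k' \<in> {1..n}" "k < k'"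
  have "g k' (f k x) < g k (f k x)" using g_order a by auto
  also have "\<dots> = g k' (f k' x)" using g_f a by simp
  finally show ?thesis using g_mono[OF a(2)] by (simp add: strict_mono_less)
qed

lemma f_v: "k \<in> {1..n} \<Longrightarrow> c < f k v"
  using f1v f_order[of 1 k v] by (cases "k = 1") auto

lemma sc_general:
  assumes k: "k \<in> {1..n}" "k' \<in> {1..n}" "k < k'" and yz: "y < z" and fy: "c < f k y"
    and A: "0 < A" and B: "0 < B"
    and i1: "(f k z - c) * B \<le> (f k y - c) * A"
    and i2: "(f k' y - c) * A \<le> (f k' z - c) * B"
  shows False
proof -
  have gy: "g k c < y" using fy f_gt_c_iff k by auto
  have r: "(f k y - c) / (f k' y - c) < (f k z - c) / (f k' z - c)"
    using ratio[OF k yz gy] .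
  have b1: "c < f k' y" using fy f_order[OF k] by (smt (verit))
  have a2: "c < f k z" using fy f_less[OF k(1) yz] by simp
  have b2: "c < f k' z" using b1 f_less[OF k(2) yz] by simp
  have "(f k z - c) * B * ((f k' y - c) * A) \<le> (f k y - c) * A * ((f k' z - c) * B)"
    by (rule mult_mono[OF i1 i2]) (use a2 B b1 A fy b2 in auto)
  then have "(f k z - c) * (f k' y - c) * (A * B) \<le> (f k y - c) * (f k' z - c) * (A * B)"
    by (simp add: mult_ac)
  then have "(f k z - c) * (f k' y - c) \<le> (f k y - c) * (f k' z - c)"
    using A B by (simp add: mult_le_cancel_right)
  moreover have "(f k y - c) * (f k' z - c) < (f k z - c) * (f k' y - c)"
    using r b1 b2 by (simp add: divide_less_eq_1 field_simps)
  ultimately show False by simp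
qed

end

context game begin

lemma sig: "k \<in> {1..n} \<Longrightarrow> prob_space (\<sigma> k) \<and> sets (\<sigma> k) = sets actM \<and> (AE a in \<sigma> k. indep E (fst a))
      \<and> integrable (\<sigma> k) (payoff l m n q c v g \<sigma> k)
      \<and> (\<forall>I x. indep E I \<longrightarrow>
           payoff l m n q c v g \<sigma> k (I, x) \<le> (\<integral>a. payoff l m n q c v g \<sigma> k a \<partial>\<sigma> k))"
  using NE unfolding symNE_def by blast

lemma ps: "k \<in> {1..n} \<Longrightarrow> prob_space (\<sigma> k)" using sig by blast
lemma sets_sig: "k \<in> {1..n} \<Longrightarrow> sets (\<sigma> k) = sets actM" using sig by blast
lemma space_sig: "k \<in> {1..n} \<Longrightarrow> space (\<sigma> k) = UNIV"
  using sets_eq_imp_space_eq[OF sets_sig] space_actM by simp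

lemma meas_sig: assumes k: "k \<in> {1..n}" shows "measurable (\<sigma> k) N = measurable actM N"
  using sets_sig[OF k] by (rule measurable_cong_sets) simp

lemma sets_fst_eq: "k \<in> {1..n} \<Longrightarrow> {a. fst a = I} \<in> sets (\<sigma> k)"
proof -
  assume k: "k \<in> {1..n}"
  have "{a \<in> space actM. fst a = I} \<in> sets actM" unfolding actM_def by measurable
  moreover have "{a. fst a = I} = {a \<in> space actM. fst a = I}" using space_actM by auto
  ultimately show ?thesis using sets_sig[OF k] by simp
qed

definition h :: "'v \<Rightarrow> ('v set \<times> ('v \<Rightarrow> real)) \<Rightarrow> real" where
  "h i a = (if i \<in> fst a then snd a i else v + 1)"

lemma h_meas: "k \<in> {1..n} \<Longrightarrow> h i \<in> borel_measurable (\<sigma> k)"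
  unfolding meas_sig h_def using t1 by simp

definition nu :: "nat \<Rightarrow> 'v \<Rightarrow> real measure" where
  "nu k i = distr (\<sigma> k) borel (h i)"

lemma nu_rd: "k \<in> {1..n} \<Longrightarrow> real_distribution (nu k i)"
  unfolding nu_def using ps h_meas by (simp add: prob_space.real_distribution_distr)

lemma nu_measure: "k \<in> {1..n} \<Longrightarrow> S \<in> sets borel \<Longrightarrow> measure (nu k i) S = measure (\<sigma> k) (h i -` S)"
  unfolding nu_def using measure_distr[OF h_meas] space_sig by simp

lemma lowprob_nu: "lowprob n q v \<sigma> i x = (\<Sum>k=1..n. q k * measure (nu k i) ({..<x} \<inter> {..v}))"
  unfolding lowprob_def
proof (intro sum.cong refl)
  fix k assume k: "k \<in> {1..n}"
  have "h i -` ({..<x} \<inter> {..v}) = {a. i \<in> fst a \<and> snd a i < x \<and> snd a i \<le> v}"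
    unfolding h_def by (auto split: if_splits)
  then show "q k * measure (\<sigma> k) {a. i \<in> fst a \<and> snd a i < x \<and> snd a i \<le> v} =
        q k * measure (nu k i) ({..<x} \<inter> {..v})" using nu_measure[OF k] by simp
qed

lemma eqprob_nu: "eqprob n q v \<sigma> i x = (\<Sum>k=1..n. q k * measure (nu k i) ({x} \<inter> {..v}))"
  unfolding eqprob_def
proof (intro sum.cong refl)
  fix k assume k: "k \<in> {1..n}"
  have "h i -` ({x} \<inter> {..v}) = {a. i \<in> fst a \<and> snd a i = x \<and> snd a i \<le> v}"
    unfolding h_def by (auto split: if_splits)
  then show "q k * measure (\<sigma> k) {a. i \<in> fst a \<and> snd a i = x \<and> snd a i \<le> v} =
        q k * measure (nu k i) ({x} \<inter> {..v})" using nu_measure[OF k] by simp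
qed

abbreviation F where "F i x \<equiv> lowprob n q v \<sigma> i x"
abbreviation e where "e i x \<equiv> eqprob n q v \<sigma> i x"

lemma F_nonneg: "0 \<le> F i x"
  unfolding lowprob_nu using q_nonneg by (auto intro!: sum_nonneg)

lemma e_nonneg: "0 \<le> e i x"
  unfolding eqprob_nu using q_nonneg by (auto intro!: sum_nonneg)

lemma Fe_le: "F i x + e i x \<le> (\<Sum>k=1..n. q k)"
proof -
  have "F i x + e i x = (\<Sum>k=1..n. q k * (measure (nu k i) ({..<x} \<inter> {..v}) + measure (nu k i) ({x} \<inter> {..v})))"
    unfolding lowprob_nu eqprob_nu by (simp add: sum.distrib algebra_simps)
  also have "\<dots> \<le> (\<Sum>k=1..n. q k * 1)"
  proof (intro sum_mono mult_left_mono)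
    fix k assume k: "k \<in> {1..n}"
    interpret real_distribution "nu k i" using nu_rd[OF k] .
    have "measure (nu k i) ({..<x} \<inter> {..v}) + measure (nu k i) ({x} \<inter> {..v})
        = measure (nu k i) ({..<x} \<inter> {..v} \<union> {x} \<inter> {..v})"
      by (subst finite_measure_Union) auto
    also have "\<dots> \<le> 1" by simp
    finally show "measure (nu k i) ({..<x} \<inter> {..v}) + measure (nu k i) ({x} \<inter> {..v}) \<le> 1" .
    show "0 \<le> q k" using q_nonneg k by auto
  qed
  finally show ?thesis by simp
qed

lemma Fe_lt1: "F i x + e i x < 1" using Fe_le q_pos_sum by (smt (verit))

definition pi :: "nat \<Rightarrow> 'v \<Rightarrow> real \<Rightarrow> real" where
  "pi k i x = (if x \<le> v then (f k x - c) * sale_prob l m (F i x) (e i x) else 0)"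

lemma payoff_pi: "payoff l m n q c v g \<sigma> k a = (\<Sum>i\<in>fst a. pi k i (snd a i))"
  unfolding payoff_def pi_def ..

lemma sp_bounds: "0 \<le> sale_prob l m (F i x) (e i x)" "sale_prob l m (F i x) (e i x) \<le> 1"
    "0 < sale_prob l m (F i x) (e i x)"
proof -
  have a: "0 \<le> F i x" "0 \<le> e i x" "F i x + e i x < 1" using F_nonneg e_nonneg Fe_lt1 by auto
  show "0 \<le> sale_prob l m (F i x) (e i x)" using sale_prob_nonneg a by simp
  show "0 < sale_prob l m (F i x) (e i x)" using sale_prob_pos a ml by simp
  have "sale_prob l m (F i x) (e i x) \<le> Wl l m (F i x)" using sale_prob_le_Wl a by simp
  also have "\<dots> \<le> 1" using Wl_le1 a by simp
  finally show "sale_prob l m (F i x) (e i x) \<le> 1" .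
qed

lemma pi_bound: "k \<in> {1..n} \<Longrightarrow> pi k i x \<le> max 0 (f k v - c)"
proof -
  assume k: "k \<in> {1..n}"
  show ?thesis
  proof (cases "x \<le> v")
    case True
    then have fx: "f k x \<le> f k v" using f_le_iff k by simp
    show ?thesis
    proof (cases "f k x - c \<ge> 0")
      case True
      then have "(f k x - c) * sale_prob l m (F i x) (e i x) \<le> (f k x - c) * 1"
        using sp_bounds by (intro mult_left_mono) auto
      then show ?thesis unfolding pi_def using \<open>x \<le> v\<close> fx by simp
    next
      case False
      then have "(f k x - c) * sale_prob l m (F i x) (e i x) \<le> 0"
        using sp_bounds by (simp add: mult_nonpos_nonneg)
      then show ?thesis unfolding pi_def using \<open>x \<le> v\<close> by simp
    qed
  qed (simp add: pi_def)
qed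

definition Phi :: "nat \<Rightarrow> 'v \<Rightarrow> real" where
  "Phi k i = (SUP x. pi k i x)"

lemma pi_bdd: assumes k: "k \<in> {1..n}" shows "bdd_above (range (pi k i))"
  by (rule bdd_aboveI[where M="max 0 (f k v - c)"]) (use pi_bound[OF k] in auto)

lemma pi_le_Phi: assumes k: "k \<in> {1..n}" shows "pi k i x \<le> Phi k i"
  unfolding Phi_def by (rule cSUP_upper) (auto intro: pi_bdd[OF k])

lemma Phi_pos: "k \<in> {1..n} \<Longrightarrow> 0 < Phi k i"
proof -
  assume k: "k \<in> {1..n}"
  have "0 < pi k i v" unfolding pi_def using f_v[OF k] sp_bounds by simp
  then show ?thesis using pi_le_Phi[OF k] by (smt (verit))
qed

definition Xs :: "nat \<Rightarrow> 'v \<Rightarrow> real set" where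
  "Xs k i = {x. pi k i x = Phi k i}"

lemma Xs_props: "k \<in> {1..n} \<Longrightarrow> x \<in> Xs k i \<Longrightarrow> x \<le> v \<and> c < f k x"
proof -
  assume k: "k \<in> {1..n}" and x: "x \<in> Xs k i"
  then have p: "pi k i x > 0" using Phi_pos unfolding Xs_def by simp
  then have "x \<le> v" unfolding pi_def by (auto split: if_splits)
  moreover have "c < f k x"
  proof (rule ccontr)
    assume "\<not> c < f k x"
    then have "(f k x - c) * sale_prob l m (F i x) (e i x) \<le> 0"
      using sp_bounds by (simp add: mult_nonpos_nonneg)
    then show False using p \<open>x \<le> v\<close> unfolding pi_def by simp
  qed
  ultimately show ?thesis by simp
qed

end

context game begin

lemma mvf: "(\<forall>s\<in>{1..d}. \<forall>r\<in>{1..d}. s \<noteq> r \<longrightarrow> Iset s \<inter> Iset r = {})"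
    "\<forall>s\<in>{1..d}. maximal_indep E (Iset s)"
  using mv unfolding mean_valid_def by blast+

lemma Iset_ne: "s \<in> {1..d} \<Longrightarrow> Iset s \<noteq> {}"
proof
  assume s: "s \<in> {1..d}" and em: "Iset s = {}"
  obtain w :: 'v where True by simp
  have "indep E {w}" unfolding indep_def using E_irrefl by auto
  moreover have "maximal_indep E (Iset s)" using mvf(2) s by blast
  then have "\<not> indep E (insert w (Iset s))" unfolding maximal_indep_def em by blast
  ultimately show False using em by simp
qed

lemma Iset_indep: "s \<in> {1..d} \<Longrightarrow> indep E (Iset s)"
  using mvf(2) unfolding maximal_indep_def by auto

lemma Iset_uniq: "s \<in> {1..d} \<Longrightarrow> s' \<in> {1..d} \<Longrightarrow> i \<in> Iset s \<Longrightarrow> i \<in> Iset s' \<Longrightarrow> s' = s"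
  using mvf(1) by blast

lemma Iset_inj: "s \<in> {1..d} \<Longrightarrow> s' \<in> {1..d} \<Longrightarrow> Iset s = Iset s' \<Longrightarrow> s = s'"
  using Iset_ne Iset_uniq by blast

lemma card_pos: "s \<in> {1..d} \<Longrightarrow> 0 < card (Iset s)"
  using Iset_ne by (simp add: card_gt_0_iff)

definition V :: "nat \<Rightarrow> real" where
  "V k = (\<integral>a. payoff l m n q c v g \<sigma> k a \<partial>\<sigma> k)"

abbreviation S where "S k s \<equiv> (\<Sum>i\<in>Iset s. Phi k i)"

lemma dev: "k \<in> {1..n} \<Longrightarrow> s \<in> {1..d} \<Longrightarrow> (\<Sum>i\<in>Iset s. pi k i (x i)) \<le> V k"
  using sig[of k] Iset_indep[of s] unfolding V_def payoff_pi by force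

lemma B2: assumes k: "k \<in> {1..n}" and s: "s \<in> {1..d}" shows "S k s \<le> V k"
proof (rule ccontr)
  assume "\<not> S k s \<le> V k"
  then have lt: "V k < S k s" by simp
  define M where "M = card (Iset s)"
  have M: "0 < M" using card_pos[OF s] M_def by simp
  define \<epsilon> where "\<epsilon> = (S k s - V k) / M"
  have eps: "0 < \<epsilon>" using lt M unfolding \<epsilon>_def by simp
  have "\<forall>i. \<exists>x. Phi k i - \<epsilon> < pi k i x"
  proof
    fix i
    have "Phi k i - \<epsilon> < (SUP x. pi k i x)" using eps unfolding Phi_def by simp
    then show "\<exists>x. Phi k i - \<epsilon> < pi k i x" using less_cSUP_iff[of UNIV "pi k i"] pi_bdd[OF k] by auto
  qed
  then obtain xv where xv: "\<And>i. Phi k i - \<epsilon> < pi k i (xv i)" by metis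
  have "(\<Sum>i\<in>Iset s. Phi k i - \<epsilon>) < (\<Sum>i\<in>Iset s. pi k i (xv i))"
    by (rule sum_strict_mono) (use xv Iset_ne[OF s] in auto)
  also have "\<dots> \<le> V k" by (rule dev[OF k s])
  finally have "S k s - M * \<epsilon> < V k" by (simp add: sum_subtractf M_def)
  then show False using M unfolding \<epsilon>_def by simp
qed

lemma t_nonneg: "s \<in> {1..d} \<Longrightarrow> k \<in> {1..n} \<Longrightarrow> 0 \<le> t s k"
  using t_def by simp

lemma t_le1: "s \<in> {1..d} \<Longrightarrow> k \<in> {1..n} \<Longrightarrow> t s k \<le> 1"
  using t_def prob_space.prob_le_1[OF ps] by simp

lemma t_sum: assumes k: "k \<in> {1..n}" shows "(\<Sum>s=1..d. t s k) = 1"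
proof -
  interpret prob_space "\<sigma> k" using ps[OF k] .
  have "(\<Sum>s=1..d. t s k) = (\<Sum>s=1..d. measure (\<sigma> k) {a. fst a = Iset s})"
    using t_def k by simp
  also have "\<dots> = measure (\<sigma> k) (\<Union>s\<in>{1..d}. {a. fst a = Iset s})"
    by (rule measure_finite_Union[symmetric])
       (use sets_fst_eq[OF k] Iset_inj in \<open>auto simp: disjoint_family_on_def\<close>)
  also have "(\<Union>s\<in>{1..d}. {a. fst a = Iset s}) = {a \<in> space (\<sigma> k). fst a \<in> Iset ` {1..d}}"
    using space_sig[OF k] by auto
  also have "measure (\<sigma> k) {a \<in> space (\<sigma> k). fst a \<in> Iset ` {1..d}} = 1"
  proof -
    have "{a \<in> space (\<sigma> k). fst a \<in> Iset ` {1..d}} = (\<Union>s\<in>{1..d}. {a. fst a = Iset s})"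
      using space_sig[OF k] by auto
    also have "\<dots> \<in> sets (\<sigma> k)" using sets_fst_eq[OF k] by auto
    finally have ev: "{a \<in> space (\<sigma> k). fst a \<in> Iset ` {1..d}} \<in> events" .
    show ?thesis using prob_Collect_eq_1[OF ev] supp[OF k] by blast
  qed
  finally show ?thesis .
qed

definition Bf :: "nat \<Rightarrow> ('v set \<times> ('v \<Rightarrow> real)) \<Rightarrow> real" where
  "Bf k a = (\<Sum>s=1..d. indicator {a. fst a = Iset s} a * S k s)"

lemma Bf_at: assumes s0: "s0 \<in> {1..d}" and a: "fst a = Iset s0" shows "Bf k a = S k s0"
proof -
  have "Bf k a = (\<Sum>s=1..d. if s = s0 then S k s else 0)"
    unfolding Bf_def
  proof (intro sum.cong refl)
    fix s assume s: "s \<in> {1..d}"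
    have "(fst a = Iset s) = (s = s0)" using Iset_inj[OF s s0] a by auto
    then show "indicator {a. fst a = Iset s} a * S k s = (if s = s0 then S k s else 0)"
      by (simp add: indicator_def)
  qed
  also have "\<dots> = S k s0" using s0 by simp
  finally show ?thesis .
qed

lemma B: assumes k: "k \<in> {1..n}"
  shows "\<forall>s\<in>{1..d}. t s k > 0 \<longrightarrow> S k s = V k"
    and "AE a in \<sigma> k. \<forall>i\<in>fst a. pi k i (snd a i) = Phi k i"
proof -
  interpret prob_space "\<sigma> k" using ps[OF k] .
  have int_pay: "integrable (\<sigma> k) (payoff l m n q c v g \<sigma> k)" using sig[OF k] by blast
  have int_B: "integrable (\<sigma> k) (Bf k)"
    unfolding Bf_def
  proof (intro Bochner_Integration.integrable_sum)
    fix s show "integrable (\<sigma> k) (\<lambda>a. indicator {a. fst a = Iset s} a * S k s)"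
      using sets_fst_eq[OF k] by (intro integrable_mult_left integrable_real_indicator) (auto simp: less_top[symmetric])
  qed
  have intB: "(\<integral>a. Bf k a \<partial>\<sigma> k) = (\<Sum>s=1..d. t s k * S k s)"
    unfolding Bf_def
  proof (subst Bochner_Integration.integral_sum)
    fix s show "integrable (\<sigma> k) (\<lambda>a. indicator {a. fst a = Iset s} a * S k s)"
      using sets_fst_eq[OF k] by (intro integrable_mult_left integrable_real_indicator) (auto simp: less_top[symmetric])
  next
    show "(\<Sum>s = 1..d. \<integral>a. indicator {a. fst a = Iset s} a * S k s \<partial>\<sigma> k) = (\<Sum>s = 1..d. t s k * S k s)"
      by (intro sum.cong refl) (simp add: t_def[OF _ k] space_sig[OF k])
  qed
  have le: "(\<Sum>s=1..d. t s k * S k s) \<le> (\<Sum>s=1..d. t s k * V k)"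
    by (intro sum_mono mult_left_mono) (use B2[OF k] t_nonneg k in auto)
  have sumV: "(\<Sum>s=1..d. t s k * V k) = V k" using t_sum[OF k] by (simp add: sum_distrib_right[symmetric])
  have AEle: "AE a in \<sigma> k. payoff l m n q c v g \<sigma> k a \<le> Bf k a"
    using supp[OF k]
  proof eventually_elim
    case (elim a)
    then obtain s0 where s0: "s0 \<in> {1..d}" "fst a = Iset s0" by auto
    have "payoff l m n q c v g \<sigma> k a = (\<Sum>i\<in>Iset s0. pi k i (snd a i))"
      unfolding payoff_pi s0 ..
    also have "\<dots> \<le> S k s0" by (intro sum_mono pi_le_Phi[OF k])
    finally show ?case using Bf_at[OF s0] by simp
  qed
  have int_d: "integrable (\<sigma> k) (\<lambda>a. Bf k a - payoff l m n q c v g \<sigma> k a)"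
    using int_B int_pay by simp
  have i0: "(\<integral>a. Bf k a - payoff l m n q c v g \<sigma> k a \<partial>\<sigma> k) = (\<Sum>s=1..d. t s k * S k s) - V k"
    using int_B int_pay intB unfolding V_def by simp
  have inn: "0 \<le> (\<integral>a. Bf k a - payoff l m n q c v g \<sigma> k a \<partial>\<sigma> k)"
    by (rule integral_nonneg_AE) (use AEle in \<open>auto elim: AE_mp\<close>)
  have eqV: "(\<Sum>s=1..d. t s k * S k s) = V k" using i0 inn le sumV by linarith
  have "AE a in \<sigma> k. Bf k a - payoff l m n q c v g \<sigma> k a = 0"
    using integral_nonneg_eq_0_iff_AE[OF int_d] AEle i0 eqV by (auto elim: AE_mp)
  then show "AE a in \<sigma> k. \<forall>i\<in>fst a. pi k i (snd a i) = Phi k i"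
    using supp[OF k]
  proof eventually_elim
    case (elim a)
    then obtain s0 where s0: "s0 \<in> {1..d}" "fst a = Iset s0" by auto
    have eq: "(\<Sum>i\<in>Iset s0. pi k i (snd a i)) = (\<Sum>i\<in>Iset s0. Phi k i)"
      using elim Bf_at[OF s0] unfolding payoff_pi s0 by simp
    show ?case
    proof (rule ccontr)
      assume "\<not> (\<forall>i\<in>fst a. pi k i (snd a i) = Phi k i)"
      then obtain i0 where "i0 \<in> Iset s0" "pi k i0 (snd a i0) \<noteq> Phi k i0" using s0 by auto
      then have "(\<Sum>i\<in>Iset s0. pi k i (snd a i)) < (\<Sum>i\<in>Iset s0. Phi k i)"
        using pi_le_Phi[OF k] by (intro sum_strict_mono_ex1) (auto intro: le_neq_trans)
      then show False using eq by simp
    qed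
  qed
  have "(\<Sum>s=1..d. t s k * (V k - S k s)) = 0"
    using eqV sumV by (simp add: right_diff_distrib sum_subtractf)
  moreover have "\<forall>s\<in>{1..d}. 0 \<le> t s k * (V k - S k s)"
    using B2[OF k] t_nonneg k by auto
  ultimately have "\<forall>s\<in>{1..d}. t s k * (V k - S k s) = 0"
    using sum_nonneg_eq_0_iff[of "{1..d}" "\<lambda>s. t s k * (V k - S k s)"] by blast
  then show "\<forall>s\<in>{1..d}. t s k > 0 \<longrightarrow> S k s = V k" by auto
qed

end

lemma (in finite_borel_measure) meas_lessThan_at_left:
  "((\<lambda>y. measure M {..<y}) \<longlongrightarrow> measure M {..<a}) (at_left a)"
proof (rule tendsto_at_left_sequentially[of "a - 1"])
  fix f :: "nat \<Rightarrow> real" assume f: "incseq f" "f \<longlonglongrightarrow> a" "\<And>x. f x < a" "\<And>x. a - 1 < f x"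
  then have "(\<lambda>n. measure M {..<f n}) \<longlonglongrightarrow> measure M (\<Union>i. {..<f i})"
    using \<open>incseq f\<close>
    by (intro finite_Lim_measure_incseq) (auto simp: incseq_def intro: less_le_trans)
  also have "(\<Union>i. {..<f i}) = {..<a}"
    by (auto dest!: order_tendstoD(1)[OF f(2)] eventually_happens'[OF sequentially_bot]
             intro: less_trans f(3))
  finally show "(\<lambda>n. measure M {..<f n}) \<longlonglongrightarrow> measure M {..<a}" .
qed auto

lemma sp_tendsto:
  assumes "(a \<longlongrightarrow> a0) F" "(b \<longlongrightarrow> b0) F"
  shows "((\<lambda>y. sale_prob l m (a y) (b y)) \<longlongrightarrow> sale_prob l m a0 b0) F"
  unfolding sale_prob_def by (intro tendsto_intros assms)

lemma Wl_cont: "continuous_on UNIV (Wl l m)"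
  unfolding Wl_def by (intro continuous_intros)

lemma Wl_pos: "1 \<le> m \<Longrightarrow> 0 \<le> a \<Longrightarrow> a < 1 \<Longrightarrow> 0 < Wl l m a"
  using sale_prob_pos[of a 0 m l] sale_prob_zero by simp

context game begin

lemma AE_Xs: assumes k: "k \<in> {1..n}" shows "AE a in \<sigma> k. i \<in> fst a \<longrightarrow> snd a i \<in> Xs k i"
  using B(2)[OF k] by eventually_elim (auto simp: Xs_def)

lemma h_sets: "k \<in> {1..n} \<Longrightarrow> S' \<in> sets borel \<Longrightarrow> h i -` S' \<in> sets (\<sigma> k)"
  using measurable_sets[OF h_meas] space_sig by (metis Int_UNIV_right)

lemma N_null:
  assumes k: "k \<in> {1..n}" and S: "S' \<in> sets borel" and dis: "S' \<inter> Xs k i = {}" and vS: "v + 1 \<notin> S'"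
  shows "measure (nu k i) S' = 0"
proof -
  have "measure (\<sigma> k) (h i -` S') = measure (\<sigma> k) {}"
  proof (rule measure_eq_AE)
    show "AE x in \<sigma> k. (x \<in> h i -` S') = (x \<in> {})"
      using AE_Xs[OF k, of i]
    proof eventually_elim
      case (elim a) then show ?case using dis vS by (auto simp: h_def)
    qed
  qed (use h_sets[OF k S] in auto)
  then show ?thesis using nu_measure[OF k S] by simp
qed

lemma N_tot:
  assumes k: "k \<in> {1..n}" and s: "s \<in> {1..d}" and i: "i \<in> Iset s"
  shows "measure (nu k i) {..v} = t s k"
proof -
  have "measure (\<sigma> k) (h i -` {..v}) = measure (\<sigma> k) {a. fst a = Iset s}"
  proof (rule measure_eq_AE)
    show "AE x in \<sigma> k. (x \<in> h i -` {..v}) = (x \<in> {a. fst a = Iset s})"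
      using AE_Xs[OF k, of i] supp[OF k]
    proof eventually_elim
      case (elim a)
      then obtain s' where s': "s' \<in> {1..d}" "fst a = Iset s'" by auto
      have "i \<in> fst a \<longleftrightarrow> fst a = Iset s" using s' Iset_uniq[OF s s'(1) i] i by auto
      moreover have "i \<in> fst a \<Longrightarrow> snd a i \<le> v" using elim(1) Xs_props[OF k] by auto
      ultimately show ?case by (auto simp: h_def)
    qed
  qed (use h_sets[OF k] sets_fst_eq[OF k] in auto)
  then show ?thesis using nu_measure[OF k] t_def[OF s k] by simp
qed

lemma Xs_nonempty:
  assumes k: "k \<in> {1..n}" and s: "s \<in> {1..d}" and i: "i \<in> Iset s" and tp: "0 < t s k"
  shows "Xs k i \<noteq> {}"
proof
  assume "Xs k i = {}"
  then have "measure (nu k i) {..v} = 0" by (intro N_null[OF k]) auto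
  then show False using N_tot[OF k s i] tp by simp
qed

lemma meas_single: "k \<in> {1..n} \<Longrightarrow> measure (nu k i) {y} = cdf (nu k i) y - measure (nu k i) {..<y}"
proof -
  assume k: "k \<in> {1..n}"
  interpret real_distribution "nu k i" using nu_rd[OF k] .
  have "measure (nu k i) ({..<y} \<union> {y}) = measure (nu k i) {..<y} + measure (nu k i) {y}"
    by (subst finite_measure_Union) auto
  moreover have "{..<y} \<union> {y} = {..y}" by auto
  ultimately show ?thesis by (simp add: cdf_def)
qed

lemma atomless: "e i x0 = 0"
proof (rule ccontr)
  assume ne: "e i x0 \<noteq> 0"
  then have pos: "0 < e i x0" using e_nonneg[of i x0] by simp
  have x0v: "x0 \<le> v"
  proof (rule ccontr)
    assume "\<not> x0 \<le> v"
    then have "{x0} \<inter> {..v} = {}" by auto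
    then show False using ne unfolding eqprob_nu by simp
  qed
  have "\<exists>k\<in>{1..n}. 0 < q k * measure (nu k i) ({x0} \<inter> {..v})"
  proof (rule ccontr)
    assume "\<not> ?thesis"
    then have "e i x0 \<le> 0" unfolding eqprob_nu by (intro sum_nonpos) (auto simp: not_less)
    then show False using pos by simp
  qed
  then obtain k where k: "k \<in> {1..n}" and kp: "0 < q k * measure (nu k i) {x0}"
    using x0v by auto
  have mx: "0 < measure (nu k i) {x0}" using kp q_nonneg[of k] k
    by (simp add: zero_less_mult_iff)
  have x0X: "x0 \<in> Xs k i"
  proof (rule ccontr)
    assume "x0 \<notin> Xs k i"
    then have "measure (nu k i) {x0} = 0" using x0v by (intro N_null[OF k]) auto
    then show False using mx by simp
  qed
  have fx0: "c < f k x0" using Xs_props[OF k x0X] by simp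
  have ev: "eventually (\<lambda>y. y \<in> {x0 - 1<..<x0}) (at_left x0)"
    by (rule eventually_at_left_real) simp
  define L where "L k' = measure (nu k' i) {..<x0}" for k'
  have Fx0: "F i x0 = (\<Sum>k'=1..n. q k' * L k')"
    unfolding lowprob_nu L_def using x0v by (intro sum.cong refl) (auto intro!: arg_cong[where f="measure _"])
  have limF: "(F i \<longlongrightarrow> F i x0) (at_left x0)"
  proof -
    have "((\<lambda>y. \<Sum>k'=1..n. q k' * measure (nu k' i) {..<y}) \<longlongrightarrow> (\<Sum>k'=1..n. q k' * L k')) (at_left x0)"
    proof (intro tendsto_sum tendsto_mult_left)
      fix k' assume k': "k' \<in> {1..n}"
      interpret real_distribution "nu k' i" using nu_rd[OF k'] .
      show "((\<lambda>y. measure (nu k' i) {..<y}) \<longlongrightarrow> L k') (at_left x0)"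
        unfolding L_def by (rule meas_lessThan_at_left)
    qed
    moreover have "eventually (\<lambda>y. (\<Sum>k'=1..n. q k' * measure (nu k' i) {..<y}) = F i y) (at_left x0)"
      using ev
    proof eventually_elim
      case (elim y)
      then have "{..<y} \<inter> {..v} = {..<y}" using x0v by auto
      then show ?case unfolding lowprob_nu by simp
    qed
    ultimately show ?thesis using Fx0 by (simp add: tendsto_cong)
  qed
  have lime: "(e i \<longlongrightarrow> 0) (at_left x0)"
  proof -
    have "((\<lambda>y. \<Sum>k'=1..n. q k' * (cdf (nu k' i) y - measure (nu k' i) {..<y})) \<longlongrightarrow> (\<Sum>k'=1..n. q k' * (L k' - L k'))) (at_left x0)"
    proof (intro tendsto_sum tendsto_mult_left tendsto_diff)
      fix k' assume k': "k' \<in> {1..n}"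
      interpret real_distribution "nu k' i" using nu_rd[OF k'] .
      show "((\<lambda>y. measure (nu k' i) {..<y}) \<longlongrightarrow> L k') (at_left x0)"
        unfolding L_def by (rule meas_lessThan_at_left)
      show "(cdf (nu k' i) \<longlongrightarrow> L k') (at_left x0)"
        unfolding L_def by (rule cdf_at_left)
    qed
    moreover have "eventually (\<lambda>y. (\<Sum>k'=1..n. q k' * (cdf (nu k' i) y - measure (nu k' i) {..<y})) = e i y) (at_left x0)"
      using ev
    proof eventually_elim
      case (elim y)
      then have "{y} \<inter> {..v} = {y}" using x0v by auto
      then show ?case unfolding eqprob_nu using meas_single by simp
    qed
    ultimately show ?thesis by (simp add: tendsto_cong)
  qed
  have limf: "(f k \<longlongrightarrow> f k x0) (at_left x0)"
    using f_cont[OF k, of x0] unfolding isCont_def by (rule filterlim_mono) (simp_all add: at_le)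
  have lim: "((\<lambda>y. (f k y - c) * sale_prob l m (F i y) (e i y)) \<longlongrightarrow> (f k x0 - c) * sale_prob l m (F i x0) 0) (at_left x0)"
    by (intro tendsto_intros limf sp_tendsto limF lime)
  have "Phi k i = (f k x0 - c) * sale_prob l m (F i x0) (e i x0)"
    using x0X x0v unfolding Xs_def pi_def by simp
  also have "\<dots> < (f k x0 - c) * sale_prob l m (F i x0) 0"
  proof -
    have "sale_prob l m (F i x0) (e i x0) < Wl l m (F i x0)"
      using sale_prob_strict[of "F i x0" "e i x0" m l] F_nonneg pos Fe_lt1 ml by simp
    then show ?thesis using fx0 sale_prob_zero by simp
  qed
  finally have "eventually (\<lambda>y. Phi k i < (f k y - c) * sale_prob l m (F i y) (e i y)) (at_left x0)"
    using order_tendstoD(1)[OF lim] by blast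
  then have "eventually (\<lambda>y. False) (at_left x0)"
    using ev
  proof eventually_elim
    case (elim y)
    then have "pi k i y = (f k y - c) * sale_prob l m (F i y) (e i y)" using x0v unfolding pi_def by simp
    then show ?case using elim pi_le_Phi[OF k, of i y] by simp
  qed
  then show False by simp
qed

end

context game begin

lemma e_terms0: "k \<in> {1..n} \<Longrightarrow> x \<le> v \<Longrightarrow> q k * measure (nu k i) {x} = 0"
proof -
  assume k: "k \<in> {1..n}" and x: "x \<le> v"
  have "(\<Sum>k'=1..n. q k' * measure (nu k' i) ({x} \<inter> {..v})) = 0"
    using atomless[of i x] unfolding eqprob_nu .
  moreover have "\<forall>k'\<in>{1..n}. 0 \<le> q k' * measure (nu k' i) ({x} \<inter> {..v})" using q_nonneg by auto
  ultimately have "\<forall>k'\<in>{1..n}. q k' * measure (nu k' i) ({x} \<inter> {..v}) = 0"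
    using sum_nonneg_eq_0_iff[of "{1..n}" "\<lambda>k'. q k' * measure (nu k' i) ({x} \<inter> {..v})"] by blast
  then have "q k * measure (nu k i) ({x} \<inter> {..v}) = 0" using k by blast
  moreover have "{x} \<inter> {..v} = {x}" using x by auto
  ultimately show ?thesis by simp
qed

lemma F_below: "x \<le> v \<Longrightarrow> F i x = (\<Sum>k=1..n. q k * measure (nu k i) {..<x})"
  unfolding lowprob_nu by (intro sum.cong refl) (auto intro!: arg_cong[where f="measure _"])

lemma C_isCont: "x \<le> v \<Longrightarrow> isCont (\<lambda>y. \<Sum>k=1..n. q k * cdf (nu k i) y) x"
proof -
  assume x: "x \<le> v"
  show ?thesis
  proof (intro isCont_sum ballI)
    fix k assume k: "k \<in> {1..n}"
    interpret real_distribution "nu k i" using nu_rd[OF k] .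
    show "isCont (\<lambda>y. q k * cdf (nu k i) y) x"
    proof (cases "q k = 0")
      case False
      then have "measure (nu k i) {x} = 0" using e_terms0[OF k, of x i] x by simp
      then have "isCont (cdf (nu k i)) x" using isCont_cdf by simp
      then show ?thesis by (rule isCont_mult[OF continuous_const])
    next
      case True
      then have eq0: "(\<lambda>y. q k * cdf (nu k i) y) = (\<lambda>y. 0)" by (intro ext) simp
      show ?thesis unfolding eq0 by (rule continuous_const)
    qed
  qed
qed

lemma F_eq_C: assumes y: "y \<le> v" shows "F i y = (\<Sum>k=1..n. q k * cdf (nu k i) y)"
proof -
  have "F i y = (\<Sum>k=1..n. q k * measure (nu k i) {..<y})" using F_below y by simp
  also have "\<dots> = (\<Sum>k=1..n. q k * cdf (nu k i) y - q k * measure (nu k i) {y})"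
  proof (intro sum.cong refl)
    fix k assume k: "k \<in> {1..n}"
    have "measure (nu k i) {..<y} = cdf (nu k i) y - measure (nu k i) {y}"
      using meas_single[OF k, of i y] by linarith
    then show "q k * measure (nu k i) {..<y} = q k * cdf (nu k i) y - q k * measure (nu k i) {y}"
      by (simp add: right_diff_distrib)
  qed
  also have "\<dots> = (\<Sum>k=1..n. q k * cdf (nu k i) y)"
  proof (intro sum.cong refl)
    fix k assume k: "k \<in> {1..n}"
    show "q k * cdf (nu k i) y - q k * measure (nu k i) {y} = q k * cdf (nu k i) y"
      using e_terms0[OF k y, of i] by linarith
  qed
  finally show ?thesis .
qed

lemma F_cont: "continuous_on {..v} (F i)"
proof (rule continuous_on_eq)
  show "continuous_on {..v} (\<lambda>y. \<Sum>k=1..n. q k * cdf (nu k i) y)"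
    by (rule continuous_at_imp_continuous_on) (use C_isCont in auto)
  show "\<And>y. y \<in> {..v} \<Longrightarrow> (\<Sum>k=1..n. q k * cdf (nu k i) y) = F i y"
    using F_eq_C by simp
qed

lemma pi_form: "x \<le> v \<Longrightarrow> pi k i x = (f k x - c) * Wl l m (F i x)"
  unfolding pi_def using atomless[of i x] sale_prob_zero by simp

lemma F_lt1: "0 \<le> F i x \<and> F i x < 1"
  using F_nonneg e_nonneg[of i x] Fe_lt1[of i x] by simp

lemma WF_pos: "0 < Wl l m (F i x)"
  using F_lt1 Wl_pos ml by simp

lemma pi_cont: assumes k: "k \<in> {1..n}" shows "continuous_on {..v} (pi k i)"
proof (rule continuous_on_eq)
  have c1: "continuous_on {..v} (f k)"
    using f_cont[OF k] by (intro continuous_at_imp_continuous_on) auto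
  have c2: "continuous_on {..v} (\<lambda>x. Wl l m (F i x))"
    using continuous_on_compose2[OF Wl_cont F_cont] by simp
  show "continuous_on {..v} (\<lambda>x. (f k x - c) * Wl l m (F i x))"
    by (intro continuous_on_mult continuous_on_diff continuous_on_const c1 c2)
  show "\<And>x. x \<in> {..v} \<Longrightarrow> (f k x - c) * Wl l m (F i x) = pi k i x"
    using pi_form by simp
qed

lemma Xs_eq: "k \<in> {1..n} \<Longrightarrow> Xs k i = {x \<in> {..v}. pi k i x = Phi k i}"
  using Xs_props unfolding Xs_def by auto

lemma Xs_closed: "k \<in> {1..n} \<Longrightarrow> closed (Xs k i)"
  unfolding Xs_eq by (intro continuous_closed_preimage_constant pi_cont) auto

lemma Xs_bdd_below: "k \<in> {1..n} \<Longrightarrow> bdd_below (Xs k i)"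
proof -
  assume k: "k \<in> {1..n}"
  show ?thesis
  proof (rule bdd_belowI[where m="g k c"])
    fix x assume "x \<in> Xs k i"
    then have "c < f k x" using Xs_props[OF k] by simp
    then show "g k c \<le> x" using f_gt_c_iff[OF k] by simp
  qed
qed

lemma sc_node:
  assumes k: "k \<in> {1..n}" "k' \<in> {1..n}" "k < k'" and y: "y \<in> Xs k i" and z: "z \<in> Xs k' i"
  shows "z \<le> y"
proof (rule ccontr)
  assume "\<not> z \<le> y"
  then have yz: "y < z" by simp
  have yv: "y \<le> v" "c < f k y" using Xs_props[OF k(1) y] by auto
  have zv: "z \<le> v" using Xs_props[OF k(2) z] by auto
  show False
  proof (rule sc_general[OF k yz yv(2) WF_pos WF_pos])
    have "pi k i z \<le> Phi k i" by (rule pi_le_Phi[OF k(1)])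
    then show "(f k z - c) * Wl l m (F i z) \<le> (f k y - c) * Wl l m (F i y)"
      using y pi_form[OF yv(1), of k i] pi_form[OF zv, of k i] unfolding Xs_def by simp
    have "pi k' i y \<le> Phi k' i" by (rule pi_le_Phi[OF k(2)])
    then show "(f k' y - c) * Wl l m (F i y) \<le> (f k' z - c) * Wl l m (F i z)"
      using z pi_form[OF yv(1), of k' i] pi_form[OF zv, of k' i] unfolding Xs_def by simp
  qed
qed

lemma F_flat:
  assumes yz: "y \<le> z" "z \<le> v" and null: "\<And>k. k \<in> {1..n} \<Longrightarrow> measure (nu k i) {y<..<z} = 0"
  shows "F i z = F i y"
proof (cases "y = z")
  case False
  then have yz': "y < z" using yz by simp
  have "F i z = (\<Sum>k=1..n. q k * measure (nu k i) {..<z})" using F_below yz by simp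
  also have "\<dots> = (\<Sum>k=1..n. q k * measure (nu k i) {..<y})"
  proof (intro sum.cong refl)
    fix k assume k: "k \<in> {1..n}"
    interpret real_distribution "nu k i" using nu_rd[OF k] .
    have "{..<z} = ({..<y} \<union> {y}) \<union> {y<..<z}" using yz' by auto
    moreover have "measure (nu k i) (({..<y} \<union> {y}) \<union> {y<..<z}) = measure (nu k i) ({..<y} \<union> {y}) + measure (nu k i) {y<..<z}"
      by (rule finite_measure_Union) auto
    moreover have "measure (nu k i) ({..<y} \<union> {y}) = measure (nu k i) {..<y} + measure (nu k i) {y}"
      by (rule finite_measure_Union) auto
    ultimately have "measure (nu k i) {..<z} = measure (nu k i) {..<y} + measure (nu k i) {y} + measure (nu k i) {y<..<z}"
      by simp
    then show "q k * measure (nu k i) {..<z} = q k * measure (nu k i) {..<y}"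
      using e_terms0[OF k, of y i] null[OF k] yz by (simp add: distrib_left)
  qed
  also have "\<dots> = F i y" using F_below yz by simp
  finally show ?thesis .
qed simp

end

context game begin

abbreviation U where "U s k \<equiv> Uval l m n q c v g t s k"
abbreviation gm where "gm s k \<equiv> gam n q t s k"

definition Inv :: "'v \<Rightarrow> nat \<Rightarrow> real \<Rightarrow> bool" where
  "Inv i k u \<longleftrightarrow> u \<le> v \<and> (\<forall>k'\<in>{1..n}. k' < k \<longrightarrow> measure (nu k' i) {..<u} = 0)
     \<and> (\<forall>k'\<in>{1..n}. k \<le> k' \<longrightarrow> (\<forall>z\<in>Xs k' i. z \<le> u))"

lemma gam_split: "k \<in> {1..n} \<Longrightarrow> gm s k = t s k * q k + gm s (k+1)"
  unfolding gam_def by (simp add: sum.atLeast_Suc_atMost)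

lemma gam_bounds: assumes s: "s \<in> {1..d}" and k: "1 \<le> k" shows "0 \<le> gm s k" "gm s k < 1"
proof -
  have "gm s k \<le> (\<Sum>k'=k..n. q k')"
    unfolding gam_def using k t_le1[OF s] q_nonneg
    by (intro sum_mono) (auto intro!: mult_left_le_one_le simp: t_nonneg[OF s])
  also have "\<dots> \<le> (\<Sum>k'=1..n. q k')"
    by (rule sum_mono2) (use k q_nonneg in auto)
  finally show "gm s k < 1" using q_pos_sum by simp
  show "0 \<le> gm s k" unfolding gam_def using k t_nonneg[OF s] q_nonneg by (auto intro!: sum_nonneg)
qed

lemma gam_W_pos: "s \<in> {1..d} \<Longrightarrow> 1 \<le> k \<Longrightarrow> 0 < Wl l m (gm s k)"
  using gam_bounds Wl_pos ml by simp

lemma F_Inv: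
  assumes s: "s \<in> {1..d}" and i: "i \<in> Iset s" and k: "1 \<le> k" and I: "Inv i k u"
  shows "F i u = gm s k"
proof -
  have uv: "u \<le> v" using I unfolding Inv_def by simp
  have terms: "q k' * measure (nu k' i) {..<u} = (if k \<le> k' then t s k' * q k' else 0)"
    if k': "k' \<in> {1..n}" for k'
  proof (cases "k \<le> k'")
    case False
    then show ?thesis using I k' unfolding Inv_def by auto
  next
    case True
    interpret real_distribution "nu k' i" using nu_rd[OF k'] .
    have "{..v} = ({..<u} \<union> {u}) \<union> {u<..v}" using uv by auto
    moreover have "measure (nu k' i) (({..<u} \<union> {u}) \<union> {u<..v}) = measure (nu k' i) ({..<u} \<union> {u}) + measure (nu k' i) {u<..v}"
      by (rule finite_measure_Union) auto
    moreover have "measure (nu k' i) ({..<u} \<union> {u}) = measure (nu k' i) {..<u} + measure (nu k' i) {u}"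
      by (rule finite_measure_Union) auto
    moreover have "measure (nu k' i) {u<..v} = 0"
    proof (rule N_null[OF k'])
      show "{u<..v} \<inter> Xs k' i = {}" using I True k' unfolding Inv_def by force
    qed auto
    ultimately have "measure (nu k' i) {..v} = measure (nu k' i) {..<u} + measure (nu k' i) {u}" by simp
    then have "q k' * measure (nu k' i) {..<u} = q k' * measure (nu k' i) {..v}"
      using e_terms0[OF k' uv, of i] by (simp add: distrib_left)
    then show ?thesis using N_tot[OF k' s i] True by simp
  qed
  have "F i u = (\<Sum>k'=1..n. q k' * measure (nu k' i) {..<u})" using F_below uv by simp
  also have "\<dots> = (\<Sum>k'=1..n. if k \<le> k' then t s k' * q k' else 0)"
    using terms by (intro sum.cong refl) auto
  also have "\<dots> = (\<Sum>k'\<in>{x\<in>{1..n}. k \<le> x}. t s k' * q k')"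
    by (subst sum.inter_filter) auto
  also have "{x\<in>{1..n}. k \<le> x} = {k..n}" using k by auto
  finally show ?thesis unfolding gam_def .
qed

lemma top:
  assumes s: "s \<in> {1..d}" and i: "i \<in> Iset s" and k: "k \<in> {1..n}" and I: "Inv i k u"
    and ne: "Xs k i \<noteq> {}"
  shows "u \<in> Xs k i"
proof -
  have uv: "u \<le> v" using I unfolding Inv_def by simp
  have ub: "\<forall>z\<in>Xs k i. z \<le> u" using I k unfolding Inv_def by auto
  have bdd: "bdd_above (Xs k i)" using ub by (auto intro: bdd_aboveI)
  define b where "b = Sup (Xs k i)"
  have bX: "b \<in> Xs k i" unfolding b_def using closed_contains_Sup[OF ne bdd Xs_closed[OF k]] .
  have bu: "b \<le> u" unfolding b_def using ub ne by (intro cSup_least) auto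
  show ?thesis
  proof (cases "b = u")
    case True then show ?thesis using bX by simp
  next
    case False
    then have bu': "b < u" using bu by simp
    have null: "measure (nu k' i) {b<..<u} = 0" if k': "k' \<in> {1..n}" for k'
    proof (cases "k' < k")
      case True
      interpret real_distribution "nu k' i" using nu_rd[OF k'] .
      have "measure (nu k' i) {b<..<u} \<le> measure (nu k' i) {..<u}"
        by (rule finite_measure_mono) auto
      then show ?thesis using I k' True unfolding Inv_def by (simp add: measure_le_0_iff)
    next
      case False
      show ?thesis
      proof (rule N_null[OF k'])
        show "{b<..<u} \<inter> Xs k' i = {}"
        proof (safe)
          fix z assume z: "z \<in> {b<..<u}" "z \<in> Xs k' i"
          have "z \<le> b"
          proof (cases "k' = k")
            case True
            then have "z \<in> Xs k i" using z by simp
            then show ?thesis unfolding b_def using bdd by (rule cSup_upper)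
          next
            case False
            then have "k < k'" using \<open>\<not> k' < k\<close> by simp
            then show ?thesis using sc_node[OF k k' _ bX z(2)] by simp
          qed
          then show "z \<in> {}" using z by simp
        qed
        show "v + 1 \<notin> {b<..<u}" using uv by simp
      qed simp
    qed
    have Feq: "F i u = F i b" using F_flat[OF bu uv null] .
    have "pi k i b = Phi k i" using bX unfolding Xs_def by simp
    moreover have "pi k i b < pi k i u"
    proof -
      have bv: "b \<le> v" using bu uv by simp
      have "f k b < f k u" using f_less[OF k bu'] .
      then have "(f k b - c) * Wl l m (F i b) < (f k u - c) * Wl l m (F i b)"
        using WF_pos by (intro mult_strict_right_mono) auto
      then show ?thesis using pi_form[OF bv] pi_form[OF uv] Feq by simp
    qed
    ultimately show ?thesis using pi_le_Phi[OF k, of i u] by simp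
  qed
qed

lemma step:
  assumes s: "s \<in> {1..d}" and i: "i \<in> Iset s" and k: "k \<in> {1..n}" and I: "Inv i k u"
    and tp: "0 < t s k"
  shows "Inf (Xs k i) \<in> Xs k i \<and> Inv i (k+1) (Inf (Xs k i)) \<and> Inf (Xs k i) \<le> u"
proof -
  have ne: "Xs k i \<noteq> {}" using Xs_nonempty[OF k s i tp] .
  define a where "a = Inf (Xs k i)"
  have aX: "a \<in> Xs k i" unfolding a_def by (rule closed_contains_Inf[OF ne Xs_bdd_below[OF k] Xs_closed[OF k]])
  have alow: "\<And>x. x \<in> Xs k i \<Longrightarrow> a \<le> x" unfolding a_def using Xs_bdd_below[OF k] by (auto intro: cInf_lower)
  have au: "a \<le> u" using I aX k unfolding Inv_def by force
  have av: "a \<le> v" using Xs_props[OF k aX] by simp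
  have "Inv i (k+1) a"
    unfolding Inv_def
  proof (intro conjI ballI impI)
    show "a \<le> v" by (rule av)
  next
    fix k' assume k': "k' \<in> {1..n}" "k' < k + 1"
    interpret real_distribution "nu k' i" using nu_rd[OF k'(1)] .
    show "measure (nu k' i) {..<a} = 0"
    proof (cases "k' = k")
      case True
      show ?thesis
      proof (rule N_null[OF k'(1)])
        show "{..<a} \<inter> Xs k' i = {}" using alow True by force
        show "v + 1 \<notin> {..<a}" using av by simp
      qed simp
    next
      case False
      then have "k' < k" using k' by simp
      have "measure (nu k' i) {..<a} \<le> measure (nu k' i) {..<u}"
        by (rule finite_measure_mono) (use au in auto)
      then show ?thesis using I k' \<open>k' < k\<close> unfolding Inv_def by (simp add: measure_le_0_iff)
    qed
  next
    fix k' z assume k': "k' \<in> {1..n}" "k + 1 \<le> k'" and z: "z \<in> Xs k' i"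
    show "z \<le> a" unfolding a_def
      by (rule cInf_greatest[OF ne]) (use sc_node[OF k k'(1) _ _ z] k' in auto)
  qed
  then show ?thesis using aX au unfolding a_def by simp
qed

lemma U_one: "U s 1 = v" unfolding Uval_def by simp

lemma U_rec: "1 \<le> k \<Longrightarrow> U s (k+1) = g k ((c + (f k (U s k) - c) * Wfun l m (gm s k) - c) / Wfun l m (gm s (k+1)) + c)"
proof -
  assume k: "1 \<le> k"
  then obtain k0 where k0: "k = Suc k0" by (cases k) auto
  show ?thesis unfolding Uval_def using k0 by (simp add: Let_def)
qed

lemma Inv_all:
  assumes s: "s \<in> {1..d}" and i: "i \<in> Iset s"
  shows "1 \<le> k \<Longrightarrow> k \<le> n \<Longrightarrow> Inv i k (U s k)"
proof (induction k)
  case 0 then show ?case by simp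
next
  case (Suc k)
  show ?case
  proof (cases "k = 0")
    case True
    have "Inv i 1 v" unfolding Inv_def using Xs_props by auto
    then show ?thesis using True U_one by simp
  next
    case False
    then have k: "k \<in> {1..n}" using Suc by simp
    have IH: "Inv i k (U s k)" using Suc False by simp
    have Wk: "0 < Wl l m (gm s k)" "0 < Wl l m (gm s (k+1))" using gam_W_pos[OF s] k by auto
    have WW: "Wl l m (gm s j) = Wfun l m (gm s j)" for j using Wl_Wfun ml by simp
    have Urec: "U s (k+1) = g k ((f k (U s k) - c) * Wl l m (gm s k) / Wl l m (gm s (k+1)) + c)"
      using U_rec[of k s] k WW by simp
    show ?thesis
    proof (cases "0 < t s k")
      case True
      define a where "a = Inf (Xs k i)"
      have st: "a \<in> Xs k i" "Inv i (k+1) a" using step[OF s i k IH True] unfolding a_def by auto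
      have ne: "Xs k i \<noteq> {}" using st by auto
      have uX: "U s k \<in> Xs k i" using top[OF s i k IH ne] .
      have uv: "U s k \<le> v" using IH unfolding Inv_def by simp
      have av: "a \<le> v" using Xs_props[OF k st(1)] by simp
      have "pi k i (U s k) = pi k i a" using uX st(1) unfolding Xs_def by simp
      moreover have "pi k i (U s k) = (f k (U s k) - c) * Wl l m (gm s k)"
        using pi_form[OF uv] F_Inv[OF s i _ IH] k by simp
      moreover have "pi k i a = (f k a - c) * Wl l m (gm s (k+1))"
        using pi_form[OF av] F_Inv[OF s i _ st(2)] by simp
      ultimately have "f k a = (f k (U s k) - c) * Wl l m (gm s k) / Wl l m (gm s (k+1)) + c"
        using Wk by (simp add: field_simps)
      then have "U s (k+1) = g k (f k a)" using Urec by simp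
      then have "U s (k+1) = a" using g_f[OF k] by simp
      then show ?thesis using st(2) by simp
    next
      case False
      then have t0: "t s k = 0" using t_nonneg[OF s k] by simp
      then have geq: "gm s (k+1) = gm s k" using gam_split[OF k, of s] by simp
      have "U s (k+1) = U s k" using Urec geq Wk g_f[OF k] by simp
      moreover have "Inv i (k+1) (U s k)"
        unfolding Inv_def
      proof (intro conjI ballI impI)
        show uv: "U s k \<le> v" using IH unfolding Inv_def by simp
        fix k' assume k': "k' \<in> {1..n}" "k' < k + 1"
        show "measure (nu k' i) {..<U s k} = 0"
        proof (cases "k' = k")
          case True
          interpret real_distribution "nu k' i" using nu_rd[OF k'(1)] .
          have "measure (nu k' i) {..<U s k} \<le> measure (nu k' i) {..v}"
            by (rule finite_measure_mono) (use uv in auto)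
          then show ?thesis using N_tot[OF k'(1) s i] True t0 by (simp add: measure_le_0_iff)
        next
          case False
          then show ?thesis using IH k' unfolding Inv_def by auto
        qed
      next
        fix k' z assume kz: "k' \<in> {1..n}" "k + 1 \<le> k'" "z \<in> Xs k' i"
        have "\<forall>k'\<in>{1..n}. k \<le> k' \<longrightarrow> (\<forall>z\<in>Xs k' i. z \<le> U s k)" using IH unfolding Inv_def by blast
        moreover have "k \<le> k'" using kz(2) by simp
        ultimately show "z \<le> U s k" using kz(1,3) by blast
      qed
      ultimately show ?thesis by simp
    qed
  qed
qed

lemma node_facts:
  assumes s: "s \<in> {1..d}" and i: "i \<in> Iset s" and k: "k \<in> {1..n}" and tp: "0 < t s k"
  shows "U s k \<in> Xs k i" "F i (U s k) = gm s k" "Phi k i = (f k (U s k) - c) * Wl l m (gm s k)"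
    "U s k \<le> v"
proof -
  have I: "Inv i k (U s k)" using Inv_all[OF s i] k by simp
  show uX: "U s k \<in> Xs k i" using top[OF s i k I Xs_nonempty[OF k s i tp]] .
  show FU: "F i (U s k) = gm s k" using F_Inv[OF s i _ I] k by simp
  show uv: "U s k \<le> v" using I unfolding Inv_def by simp
  show "Phi k i = (f k (U s k) - c) * Wl l m (gm s k)"
    using uX pi_form[OF uv] FU unfolding Xs_def by simp
qed

end

context game begin

lemma S_val:
  assumes s: "s \<in> {1..d}" and k: "k \<in> {1..n}" and tp: "0 < t s k"
  shows "S k s = real (card (Iset s)) * ((f k (U s k) - c) * Wl l m (gm s k))"
proof -
  have "S k s = (\<Sum>i\<in>Iset s. (f k (U s k) - c) * Wl l m (gm s k))"
    by (intro sum.cong refl) (use node_facts(3)[OF s _ k tp] in auto)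
  then show ?thesis by simp
qed

lemma V_val:
  assumes s: "s \<in> {1..d}" and k: "k \<in> {1..n}" and tp: "0 < t s k"
  shows "V k = real (card (Iset s)) * ((f k (U s k) - c) * Wl l m (gm s k))"
  using B(1)[OF k] s tp S_val[OF s k tp] by simp

lemma cross:
  assumes s: "s \<in> {1..d}" and r: "r \<in> {1..d}" and j: "j \<in> {1..n}"
    and ts: "0 < t s j" and tr: "0 < t r j"
  shows "U s j \<le> U r j"
proof (rule ccontr)
  assume "\<not> U s j \<le> U r j"
  then have lt: "U r j < U s j" by simp
  obtain i' where i': "i' \<in> Iset r" using Iset_ne[OF r] by auto
  obtain is0 where is0: "is0 \<in> Iset s" using Iset_ne[OF s] by auto
  define Mr where "Mr = real (card (Iset r))"
  define Ms where "Ms = real (card (Iset s))"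
  have Mr: "0 < Mr" unfolding Mr_def using card_pos[OF r] by simp
  have Ms: "0 < Ms" unfolding Ms_def using card_pos[OF s] by simp
  have Ir: "Inv i' j (U r j)" using Inv_all[OF r i'] j by simp
  have usv: "U s j \<le> v" using node_facts(4)[OF s is0 j ts] .
  have urv: "U r j \<le> v" using node_facts(4)[OF r i' j tr] .
  have Vs: "V j = Ms * ((f j (U s j) - c) * Wl l m (gm s j))" using V_val[OF s j ts] Ms_def by simp
  have Phir: "Phi j i' = (f j (U r j) - c) * Wl l m (gm r j)" using node_facts(3)[OF r i' j tr] .
  have Vr: "V j = Mr * Phi j i'" using V_val[OF r j tr] Mr_def Phir by simp
  have Fs: "\<And>i. i \<in> Iset s \<Longrightarrow> F i (U s j) = gm s j" using node_facts(2)[OF s _ j ts] by simp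
  have null: "measure (nu k' i') {U r j<..<U s j} = 0" if k': "k' \<in> {1..n}" for k'
  proof (cases "j \<le> k'")
    case True
    show ?thesis
    proof (rule N_null[OF k'])
      show "{U r j<..<U s j} \<inter> Xs k' i' = {}" using Ir True k' unfolding Inv_def by force
      show "v + 1 \<notin> {U r j<..<U s j}" using usv by simp
    qed simp
  next
    case False
    then have kj: "k' < j" by simp
    show ?thesis
    proof (cases "0 < t r k'")
      case False
      then have t0: "t r k' = 0" using t_nonneg[OF r k'] by simp
      interpret real_distribution "nu k' i'" using nu_rd[OF k'] .
      have "measure (nu k' i') {U r j<..<U s j} \<le> measure (nu k' i') {..v}"
        by (rule finite_measure_mono) (use usv in auto)
      then show ?thesis using N_tot[OF k' r i'] t0 by (simp add: measure_le_0_iff)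
    next
      case True
      note trk = True
      show ?thesis
      proof (rule N_null[OF k'])
        show "v + 1 \<notin> {U r j<..<U s j}" using usv by simp
        show "{U r j<..<U s j} \<inter> Xs k' i' = {}"
        proof safe
          fix x assume x: "x \<in> {U r j<..<U s j}" "x \<in> Xs k' i'"
          have xv: "x \<le> v" and fx: "c < f k' x" using Xs_props[OF k' x(2)] by auto
          have pix: "pi k' i' x = Phi k' i'" using x(2) unfolding Xs_def by simp
          have Vk: "V k' = Mr * Phi k' i'"
            using V_val[OF r k' trk] node_facts(3)[OF r i' k' trk] Mr_def by simp
          define A where "A = Mr * Wl l m (F i' x)"
          define B where "B = Ms * Wl l m (gm s j)"
          have A: "0 < A" unfolding A_def using Mr WF_pos by simp
          have Bp: "0 < B" unfolding B_def using Ms gam_W_pos[OF s] j by simp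
          have False
          proof (rule sc_general[OF k' j kj _ fx A Bp])
            show "x < U s j" using x by simp
            have "(f k' (U s j) - c) * B = (\<Sum>i\<in>Iset s. pi k' i (U s j))"
            proof -
              have "(\<Sum>i\<in>Iset s. pi k' i (U s j)) = (\<Sum>i\<in>Iset s. (f k' (U s j) - c) * Wl l m (gm s j))"
                by (intro sum.cong refl) (use pi_form[OF usv] Fs in auto)
              then show ?thesis unfolding B_def Ms_def by simp
            qed
            also have "\<dots> \<le> V k'" by (rule dev[OF k' s])
            also have "\<dots> = (f k' x - c) * A"
              unfolding Vk A_def using pix pi_form[OF xv, of k' i'] by simp
            finally show "(f k' (U s j) - c) * B \<le> (f k' x - c) * A" .
            have "(f j x - c) * A = Mr * pi j i' x"
              unfolding A_def using pi_form[OF xv, of j i'] by simp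
            also have "\<dots> \<le> Mr * Phi j i'" using pi_le_Phi[OF j] Mr by simp
            also have "\<dots> = (f j (U s j) - c) * B" using Vr Vs unfolding B_def by (simp add: mult_ac)
            finally show "(f j x - c) * A \<le> (f j (U s j) - c) * B" .
          qed
          then show "x \<in> {}" by simp
        qed
      qed simp
    qed
  qed
  have "F i' (U s j) = F i' (U r j)" using F_flat[OF _ usv null] lt by simp
  also have "\<dots> = gm r j" using node_facts(2)[OF r i' j tr] .
  finally have Feq: "F i' (U s j) = gm r j" .
  have "pi j i' (U s j) = (f j (U s j) - c) * Wl l m (gm r j)" using pi_form[OF usv] Feq by simp
  also have "\<dots> > (f j (U r j) - c) * Wl l m (gm r j)"
    using f_less[OF j lt] gam_W_pos[OF r] j by (intro mult_strict_right_mono) auto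
  finally have "Phi j i' < pi j i' (U s j)" using Phir by simp
  then show False using pi_le_Phi[OF j] by (simp add: not_less[symmetric])
qed

end

theorem lemma3:
  fixes E :: "'v::finite \<Rightarrow> 'v \<Rightarrow> bool"
    and l m n d :: nat
    and q :: "nat \<Rightarrow> real"
    and c v :: real
    and g :: "nat \<Rightarrow> real \<Rightarrow> real"
    and Iset :: "nat \<Rightarrow> 'v set"
    and \<sigma> :: "nat \<Rightarrow> ('v set \<times> ('v \<Rightarrow> real)) measure"
    and t :: "nat \<Rightarrow> nat \<Rightarrow> real"
    and s r j :: nat
  assumes E_sym: "\<And>a b. E a b \<Longrightarrow> E b a"
    and E_irrefl: "\<And>a. \<not> E a a"
    and ml: "1 \<le> m" "m < l"
    and q_nonneg: "\<And>k. k \<le> n \<Longrightarrow> 0 \<le> q k"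
    and q_sum: "(\<Sum>k=0..n. q k) = 1"
    and q_pos_sum: "(\<Sum>k=1..n. q k) < 1"
    and g_cont: "\<And>k. k \<in> {1..n} \<Longrightarrow> continuous_on UNIV (g k)"
    and g_mono: "\<And>k. k \<in> {1..n} \<Longrightarrow> strict_mono (g k)"
    and g_bij: "\<And>k. k \<in> {1..n} \<Longrightarrow> bij (g k)"
    and g_order: "\<And>i k p. i \<in> {1..n} \<Longrightarrow> k \<in> {1..n} \<Longrightarrow> k < i \<Longrightarrow> g i p < g k p"
    and ratio: "\<And>i k x y. i \<in> {1..n} \<Longrightarrow> k \<in> {1..n} \<Longrightarrow> i < k \<Longrightarrow> x > y \<Longrightarrow> y > g i c \<Longrightarrow>
        (inv (g i) y - c) / (inv (g k) y - c) < (inv (g i) x - c) / (inv (g k) x - c)"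
    and f1v: "inv (g 1) v > c"
    and mv: "mean_valid E d Iset"
    and NE: "symNE l m n q c v g E \<sigma>"
    and supp: "\<And>k. k \<in> {1..n} \<Longrightarrow> AE a in \<sigma> k. fst a \<in> Iset ` {1..d}"
    and t_def: "\<And>s' k. s' \<in> {1..d} \<Longrightarrow> k \<in> {1..n} \<Longrightarrow> t s' k = measure (\<sigma> k) {a. fst a = Iset s'}"
    and s_in: "s \<in> {1..d}" and r_in: "r \<in> {1..d}" and j_in: "j \<in> {1..n}"
    and ts: "t s j > 0" and tr: "t r j > 0"
  shows "Uval l m n q c v g t s j = Uval l m n q c v g t r j"
proof -
  interpret game E l m n d q c v g Iset \<sigma> t
    by unfold_locales (fact E_irrefl ml q_nonneg q_pos_sum g_cont g_mono g_bij g_order ratio f1v mv NE supp t_def)+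
  have "Uval l m n q c v g t s j \<le> Uval l m n q c v g t r j" by (rule cross[OF s_in r_in j_in ts tr])
  moreover have "Uval l m n q c v g t r j \<le> Uval l m n q c v g t s j" by (rule cross[OF r_in s_in j_in tr ts])
  ultimately show ?thesis by simp
qed

end
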